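(* Let $G$ be a dicotic nonzugzwang scoring game all of whose terminal positions are numbers, and let $t\geq 0$. Then $0\leq Ls(G)-Ls(G_t)\leq t$ and $0\geq Rs(G)-Rs(G_t)\geq -t$.
   Context: A scoring game is $G=\langle G^L\mid G^R\rangle$ with $G^L,G^R$ finite nonempty sets of scoring games or empty sets decorated with a real, $\emptyset^s$; $\langle\emptyset^s\mid\emptyset^s\rangle$ is the number $s$. $Ls(\langle\emptyset^s\mid G^R\rangle)=s$, $Rs(\langle G^L\mid\emptyset^s\rangle)=s$, otherwise $Ls(G)=\max_{G^l\in G^L}Rs(G^l)$, $Rs(G)=\min_{G^r\in G^R}Ls(G^r)$. Dicotic: at every position both players have options or neither; nonzugzwang: $Ls(H)\ge Rs(H)$ at every position $H$. For a game $H$ and real $c$, $H+c$ is $H$ with $c$ added to every terminal score. Cooling: if $G$ is a number $k$, $G_t=k$ for all $t\ge 0$ and its temperature is $0$. Otherwise let $\widetilde G_t=\langle \{G^l_t-t: G^l\in G^L\}\mid \{G^r_t+t: G^r\in G^R\}\rangle$, let $t_0=\min\{t\geq 0: Ls(\widetilde G_t)=Rs(\widetilde G_t)\}$ (this minimum exists for dicotic nonzugzwang games), and set $G_t=\widetilde G_t$ for $t\le t_0$ and $G_t$ equal to the number $Ls(\widetilde G_{t_0})$ for $t>t_0$. The number $t_0$ is the temperature $\sigma(G)$. *)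

theory Defs
  imports Complex_Main "HOL-Library.FSet"
begin

text \<open>A side of a scoring game: either an empty option set decorated with a real
  score (the paper's empty set with superscript s), or a finite set of options.\<close>

datatype 'a side = Emp real | Opts "'a fset"

datatype sgame = SG "sgame side" "sgame side"

definition side_opts :: "'a side \<Rightarrow> 'a set" where
  "side_opts S = (case S of Emp s \<Rightarrow> {} | Opts A \<Rightarrow> fset A)"

fun side_ok :: "bool side \<Rightarrow> bool" where
  "side_ok (Emp s) = True"
| "side_ok (Opts A) = (A \<noteq> {||} \<and> (\<forall>b\<in>fset A. b))"

primrec wf_game :: "sgame \<Rightarrow> bool" where
  "wf_game (SG l r) = (side_ok (map_side wf_game l) \<and> side_ok (map_side wf_game r))"

fun lval :: "(real \<times> real) side \<Rightarrow> real" where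
  "lval (Emp s) = s"
| "lval (Opts A) = Max (snd ` fset A)"

fun rval :: "(real \<times> real) side \<Rightarrow> real" where
  "rval (Emp s) = s"
| "rval (Opts A) = Min (fst ` fset A)"

primrec scores :: "sgame \<Rightarrow> real \<times> real" where
  "scores (SG l r) = (lval (map_side scores l), rval (map_side scores r))"

definition Ls :: "sgame \<Rightarrow> real" where "Ls G = fst (scores G)"
definition Rs :: "sgame \<Rightarrow> real" where "Rs G = snd (scores G)"

definition left_opts :: "sgame \<Rightarrow> sgame set" where
  "left_opts G = (case G of SG l r \<Rightarrow> side_opts l)"
definition right_opts :: "sgame \<Rightarrow> sgame set" where
  "right_opts G = (case G of SG l r \<Rightarrow> side_opts r)"

inductive position :: "sgame \<Rightarrow> sgame \<Rightarrow> bool" where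
  refl: "position G G"
| step: "position H G \<Longrightarrow> H' \<in> left_opts H \<union> right_opts H \<Longrightarrow> position H' G"

definition num :: "real \<Rightarrow> sgame" where "num s = SG (Emp s) (Emp s)"

definition is_number :: "sgame \<Rightarrow> bool" where "is_number G = (\<exists>s. G = num s)"

definition dicotic :: "sgame \<Rightarrow> bool" where
  "dicotic G = (\<forall>H. position H G \<longrightarrow> (left_opts H = {} \<longleftrightarrow> right_opts H = {}))"

definition nonzugzwang :: "sgame \<Rightarrow> bool" where
  "nonzugzwang G = (\<forall>H. position H G \<longrightarrow> Ls H \<ge> Rs H)"

definition terminals_numbers :: "sgame \<Rightarrow> bool" where
  "terminals_numbers G = (\<forall>H. position H G \<longrightarrow> left_opts H = {} \<longrightarrow> right_opts H = {}
      \<longrightarrow> is_number H)"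

fun side_shift :: "real \<Rightarrow> 'a side \<Rightarrow> 'a side" where
  "side_shift c (Emp s) = Emp (s + c)"
| "side_shift c (Opts A) = Opts A"

primrec shift :: "real \<Rightarrow> sgame \<Rightarrow> sgame" where
  "shift c (SG l r) = SG (side_shift c (map_side (shift c) l)) (side_shift c (map_side (shift c) r))"

definition cool_step :: "(real \<Rightarrow> sgame) side \<Rightarrow> (real \<Rightarrow> sgame) side \<Rightarrow> real \<Rightarrow> sgame" where
  "cool_step L R t =
     (if (\<exists>k. L = Emp k \<and> R = Emp k) then num (THE k. L = Emp k)
      else
        (let tl = (\<lambda>u. SG (map_side (\<lambda>f. shift (- u) (f u)) L) (map_side (\<lambda>f. shift u (f u)) R));
             t0 = (LEAST u. 0 \<le> u \<and> Ls (tl u) = Rs (tl u))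
         in if t \<le> t0 then tl t else num (Ls (tl t0))))"

primrec cool :: "sgame \<Rightarrow> real \<Rightarrow> sgame" where
  "cool (SG l r) = cool_step (map_side cool l) (map_side cool r)"

end

theory Submission
  imports Defs
begin

lemma wf_shift: "wf_game (shift c H) = wf_game H"
proof (induction H)
  case (SG l r)
  show ?case
    by (cases l; cases r) (auto simp: side.map_comp o_def SG)
qed

lemma scores_shift: "wf_game H \<Longrightarrow> scores (shift c H) = (fst (scores H) + c, snd (scores H) + c)"
proof (induction H)
  case (SG l r)
  have L: "lval (map_side scores (side_shift c (map_side (shift c) l))) = lval (map_side scores l) + c"
  proof (cases l)
    case (Opts A)
    have ne: "fset A \<noteq> {}" and w: "\<forall>b\<in>fset A. wf_game b" using SG.prems Opts by auto
    have "lval (map_side scores (side_shift c (map_side (shift c) l))) = Max ((\<lambda>b. snd (scores b) + c) ` fset A)"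
      using Opts SG.IH(1) w by (simp add: image_image)
    also have "\<dots> = Max (snd ` scores ` fset A) + c"
      using ne by (simp add: Max_add_commute image_image)
    finally show ?thesis using Opts by simp
  qed simp
  have R: "rval (map_side scores (side_shift c (map_side (shift c) r))) = rval (map_side scores r) + c"
  proof (cases r)
    case (Opts A)
    have ne: "fset A \<noteq> {}" and w: "\<forall>b\<in>fset A. wf_game b" using SG.prems Opts by auto
    have "rval (map_side scores (side_shift c (map_side (shift c) r))) = Min ((\<lambda>b. fst (scores b) + c) ` fset A)"
      using Opts SG.IH(2) w by (simp add: image_image)
    also have "\<dots> = Min (fst ` scores ` fset A) + c"
      using ne by (simp add: Min_add_commute image_image)
    finally show ?thesis using Opts by simp
  qed simp
  show ?case using L R by simp
qed

lemma Ls_shift: "wf_game H \<Longrightarrow> Ls (shift c H) = Ls H + c"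
  and Rs_shift: "wf_game H \<Longrightarrow> Rs (shift c H) = Rs H + c"
  by (simp_all add: Ls_def Rs_def scores_shift)

lemma wf_num[simp]: "wf_game (num s)" by (simp add: num_def)
lemma Ls_num[simp]: "Ls (num s) = s" by (simp add: num_def Ls_def)
lemma Rs_num[simp]: "Rs (num s) = s" by (simp add: num_def Rs_def)

lemma wf_cool: "wf_game G \<Longrightarrow> wf_game (cool G t)"
proof (induction G arbitrary: t)
  case (SG l r)
  have tl: "wf_game (SG (map_side (\<lambda>f. shift (- u) (f u)) (map_side cool l))
                       (map_side (\<lambda>f. shift u (f u)) (map_side cool r)))" for u
    using SG by (cases l; cases r) (auto simp: side.map_comp o_def wf_shift)
  show ?case
    unfolding cool.simps cool_step_def Let_def using tl by auto
qed

definition TL :: "sgame fset \<Rightarrow> sgame fset \<Rightarrow> real \<Rightarrow> sgame" where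
  "TL A B u = SG (Opts ((\<lambda>g. shift (-u) (cool g u)) |`| A)) (Opts ((\<lambda>g. shift u (cool g u)) |`| B))"

lemma cool_Opts: "cool (SG (Opts A) (Opts B)) t =
  (let t0 = (LEAST u. 0 \<le> u \<and> Ls (TL A B u) = Rs (TL A B u))
   in if t \<le> t0 then TL A B t else num (Ls (TL A B t0)))"
  unfolding cool.simps cool_step_def TL_def Let_def by (simp add: fset.map_comp o_def)

lemma Ls_SG_Opts: "Ls (SG (Opts X) r) = Max (Rs ` fset X)"
  by (simp add: Ls_def Rs_def image_image)
lemma Rs_SG_Opts: "Rs (SG l (Opts X)) = Min (Ls ` fset X)"
  by (simp add: Ls_def Rs_def image_image)

lemma Ls_TL: "(\<forall>g\<in>fset A. wf_game g) \<Longrightarrow> Ls (TL A B u) = Max ((\<lambda>g. Rs (cool g u) - u) ` fset A)"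
  unfolding TL_def Ls_SG_Opts by (simp add: image_image Rs_shift wf_cool)
lemma Rs_TL: "(\<forall>g\<in>fset B. wf_game g) \<Longrightarrow> Rs (TL A B u) = Min ((\<lambda>g. Ls (cool g u) + u) ` fset B)"
  unfolding TL_def Rs_SG_Opts by (simp add: image_image Ls_shift wf_cool)

lemma position_opt: "position K H \<Longrightarrow> H \<in> left_opts G \<union> right_opts G \<Longrightarrow> position K G"
  by (induction rule: position.induct) (auto intro: position.intros)

definition hyp :: "sgame \<Rightarrow> bool" where
  "hyp G \<longleftrightarrow> wf_game G \<and> dicotic G \<and> nonzugzwang G \<and> terminals_numbers G"

lemma hyp_opt: "hyp G \<Longrightarrow> H \<in> left_opts G \<union> right_opts G \<Longrightarrow> hyp H"
proof -
  assume h: "hyp G" and o: "H \<in> left_opts G \<union> right_opts G"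
  have "wf_game H" using h o unfolding hyp_def
    by (cases G) (auto simp: left_opts_def right_opts_def side_opts_def split: side.splits)
  moreover have "\<And>K. position K H \<Longrightarrow> position K G" using position_opt o by blast
  ultimately show ?thesis using h unfolding hyp_def dicotic_def nonzugzwang_def terminals_numbers_def
    by blast
qed

lemma Max_le_shift: "finite S \<Longrightarrow> S \<noteq> {} \<Longrightarrow> (\<forall>x\<in>S. g x \<le> f x + e) \<Longrightarrow>
   Max (g ` S) \<le> Max (f ` S) + (e::real)"
proof -
  assume a: "finite S" "S \<noteq> {}" "\<forall>x\<in>S. g x \<le> f x + e"
  have "\<forall>x\<in>S. g x \<le> Max (f ` S) + e"
  proof
    fix x assume "x \<in> S"
    then have "f x \<le> Max (f ` S)" using a by simp
    moreover have "g x \<le> f x + e" using a(3) \<open>x \<in> S\<close> by blast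
    ultimately show "g x \<le> Max (f ` S) + e" by linarith
  qed
  then show ?thesis using a by simp
qed

lemma Min_le_shift: "finite S \<Longrightarrow> S \<noteq> {} \<Longrightarrow> (\<forall>x\<in>S. g x \<le> f x + e) \<Longrightarrow>
   Min (g ` S) \<le> Min (f ` S) + (e::real)"
proof -
  assume a: "finite S" "S \<noteq> {}" "\<forall>x\<in>S. g x \<le> f x + e"
  have "Min (f ` S) \<in> f ` S" using a by (intro Min_in) auto
  then obtain x where x: "x \<in> S" "f x = Min (f ` S)" by auto
  have "Min (g ` S) \<le> g x" using a x by simp
  moreover have "g x \<le> f x + e" using a(3) x(1) by blast
  ultimately show ?thesis using x(2) by linarith
qed

lemma finite_common:
  fixes P :: "'a \<Rightarrow> real \<Rightarrow> bool"
  assumes "finite S" "\<forall>g\<in>S. \<exists>x. P g x" "\<And>g x y. P g x \<Longrightarrow> x \<le> y \<Longrightarrow> P g y"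
  shows "\<exists>x. \<forall>g\<in>S. P g x"
  using assms(1,2)
proof (induction S rule: finite_induct)
  case empty then show ?case by simp
next
  case (insert a S)
  then obtain x where x: "\<forall>g\<in>S. P g x" by auto
  obtain y where y: "P a y" using insert by auto
  have "\<forall>g\<in>insert a S. P g (max x y)"
    using x y assms(3) by (metis insert_iff max.cobounded1 max.cobounded2)
  then show ?case by blast
qed

lemma lip_isCont:
  fixes f :: "real \<Rightarrow> real"
  assumes "\<forall>u v. \<bar>f u - f v\<bar> \<le> K * \<bar>u - v\<bar>" "K \<ge> 0"
  shows "isCont f x"
  unfolding isCont_def LIM_eq
proof (intro allI impI)
  fix r :: real assume r: "0 < r"
  define s where "s = r / (K + 1)"
  have s: "s > 0" using r assms(2) by (simp add: s_def)
  have "K * s < r"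
  proof -
    have "K * s = r * (K / (K + 1))" using assms(2) by (simp add: s_def)
    also have "\<dots> < r * 1" using r assms(2) by (intro mult_strict_left_mono) auto
    finally show ?thesis by simp
  qed
  have "\<forall>y. y \<noteq> x \<and> norm (y - x) < s \<longrightarrow> norm (f y - f x) < r"
  proof (intro allI impI)
    fix y assume "y \<noteq> x \<and> norm (y - x) < s"
    then have "\<bar>y - x\<bar> < s" by simp
    then have "K * \<bar>y - x\<bar> \<le> K * s" using assms(2) by (intro mult_left_mono) auto
    then show "norm (f y - f x) < r" using assms(1) \<open>K * s < r\<close>
      by (metis order_le_less_trans order_trans real_norm_def)
  qed
  then show "\<exists>s>0. \<forall>y. y \<noteq> x \<and> norm (y - x) < s \<longrightarrow> norm (f y - f x) < r" using s by blast
qed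

lemma key:
  fixes \<alpha> \<beta> :: "real \<Rightarrow> real"
  assumes b: "\<forall>t\<ge>0. LG - t \<le> \<alpha> t \<and> \<alpha> t \<le> LG \<and> RG \<le> \<beta> t \<and> \<beta> t \<le> RG + t"
    and K: "K \<ge> 0"
    and lip: "\<forall>u v. \<bar>\<alpha> u - \<alpha> v\<bar> \<le> K * \<bar>u - v\<bar> \<and> \<bar>\<beta> u - \<beta> v\<bar> \<le> K * \<bar>u - v\<bar>"
    and ev: "\<forall>u\<ge>T. \<alpha> u = \<alpha> T + T - u \<and> \<beta> u = \<beta> T - T + u"
    and z: "RG \<le> LG"
  shows "0 \<le> (LEAST u. 0 \<le> u \<and> \<alpha> u = \<beta> u) \<and>
         \<alpha> (LEAST u. 0 \<le> u \<and> \<alpha> u = \<beta> u) = \<beta> (LEAST u. 0 \<le> u \<and> \<alpha> u = \<beta> u)"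
proof -
  define f where "f u = \<alpha> u - \<beta> u" for u
  have flip: "\<bar>f u - f v\<bar> \<le> (2 * K) * \<bar>u - v\<bar>" for u v
  proof -
    have "\<bar>\<alpha> u - \<alpha> v\<bar> \<le> K * \<bar>u - v\<bar>" "\<bar>\<beta> u - \<beta> v\<bar> \<le> K * \<bar>u - v\<bar>" using lip by auto
    moreover have "\<bar>f u - f v\<bar> \<le> \<bar>\<alpha> u - \<alpha> v\<bar> + \<bar>\<beta> u - \<beta> v\<bar>"
      using abs_triangle_ineq4[of "\<alpha> u - \<alpha> v" "\<beta> u - \<beta> v"] by (simp add: f_def algebra_simps)
    ultimately show ?thesis by linarith
  qed
  have f0: "f 0 \<ge> 0" using b[rule_format, of 0] z by (simp add: f_def)
  define T' where "T' = max T 0 + \<bar>\<alpha> T + T - \<beta> T + T\<bar> + 1"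
  have T'0: "0 \<le> T'" "T \<le> T'" unfolding T'_def by auto
  have "f T' = \<alpha> T + T - T' - (\<beta> T - T + T')" using ev[rule_format, OF T'0(2)] by (simp add: f_def)
  moreover have "\<alpha> T + T - \<beta> T + T \<le> \<bar>\<alpha> T + T - \<beta> T + T\<bar>" by (rule abs_ge_self)
  moreover have "T \<le> max T 0" by simp
  ultimately have fT': "f T' \<le> 0" unfolding T'_def by linarith
  have cont: "isCont f x" for x
    using lip_isCont[of f "2 * K" x] flip K by auto
  obtain u0 where u0: "0 \<le> u0" "u0 \<le> T'" "f u0 = 0"
    using IVT2[of f T' 0 0] f0 fT' cont T'0 by auto
  define S where "S = {u. 0 \<le> u \<and> \<alpha> u = \<beta> u}"
  have Sne: "u0 \<in> S" using u0 by (simp add: S_def f_def)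
  have bdd: "bdd_below S" unfolding S_def by (rule bdd_belowI[of _ 0]) auto
  define m where "m = Inf S"
  have m0: "0 \<le> m" unfolding m_def using Sne by (intro cInf_greatest) (auto simp: S_def)
  have fm: "f m = 0"
  proof (rule ccontr)
    assume ne: "f m \<noteq> 0"
    define e where "e = \<bar>f m\<bar> / (2 * K + 1)"
    have e: "e > 0" using ne K by (simp add: e_def)
    have "Inf S < m + e" using e m_def by simp
    then obtain s where s: "s \<in> S" "s < m + e" using cInf_lessD[of S "m + e"] Sne by auto
    have "m \<le> s" unfolding m_def using s bdd by (intro cInf_lower)
    have fs: "f s = 0" using s by (simp add: S_def f_def)
    have "\<bar>f m\<bar> = \<bar>f m - f s\<bar>" using fs by simp
    also have "\<dots> \<le> (2 * K) * \<bar>m - s\<bar>" by (rule flip)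
    also have "\<dots> \<le> (2 * K) * e" using \<open>m \<le> s\<close> s K by (intro mult_left_mono) auto
    also have "\<dots> < \<bar>f m\<bar>"
    proof -
      have "(2 * K) * e = \<bar>f m\<bar> * ((2 * K) / (2 * K + 1))" using K by (simp add: e_def)
      also have "\<dots> < \<bar>f m\<bar> * 1" using ne K by (intro mult_strict_left_mono) auto
      finally show ?thesis by simp
    qed
    finally show False by simp
  qed
  have "(LEAST u. 0 \<le> u \<and> \<alpha> u = \<beta> u) = m"
  proof (rule Least_equality)
    show "0 \<le> m \<and> \<alpha> m = \<beta> m" using m0 fm by (simp add: f_def)
    fix y assume "0 \<le> y \<and> \<alpha> y = \<beta> y"
    then have "y \<in> S" by (simp add: S_def)
    then show "m \<le> y" unfolding m_def using bdd by (intro cInf_lower)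
  qed
  then show ?thesis using m0 fm by (simp add: f_def)
qed

definition good :: "sgame \<Rightarrow> bool" where
  "good G \<longleftrightarrow>
    (\<forall>t\<ge>0. Ls G - t \<le> Ls (cool G t) \<and> Ls (cool G t) \<le> Ls G \<and> Rs G \<le> Rs (cool G t) \<and> Rs (cool G t) \<le> Rs G + t) \<and>
    (\<exists>K\<ge>0. \<forall>u v. \<bar>Ls (cool G u) - Ls (cool G v)\<bar> \<le> K * \<bar>u - v\<bar> \<and> \<bar>Rs (cool G u) - Rs (cool G v)\<bar> \<le> K * \<bar>u - v\<bar>) \<and>
    (\<exists>T. \<forall>u\<ge>T. Ls (cool G u) = Ls (cool G T) \<and> Rs (cool G u) = Rs (cool G T))"

lemma good_Opts:
  assumes wfA: "\<forall>g\<in>fset A. wf_game g" and wfB: "\<forall>g\<in>fset B. wf_game g"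
    and neA: "fset A \<noteq> {}" and neB: "fset B \<noteq> {}"
    and gA: "\<forall>g\<in>fset A. good g" and gB: "\<forall>g\<in>fset B. good g"
    and z: "Rs (SG (Opts A) (Opts B)) \<le> Ls (SG (Opts A) (Opts B))"
  shows "good (SG (Opts A) (Opts B))"
proof -
  let ?G = "SG (Opts A) (Opts B)"
  define \<alpha> where "\<alpha> u = Ls (TL A B u)" for u
  define \<beta> where "\<beta> u = Rs (TL A B u)" for u
  have \<alpha>_eq: "\<alpha> u = Max ((\<lambda>g. Rs (cool g u) - u) ` fset A)" for u
    unfolding \<alpha>_def using wfA by (rule Ls_TL)
  have \<beta>_eq: "\<beta> u = Min ((\<lambda>g. Ls (cool g u) + u) ` fset B)" for u
    unfolding \<beta>_def using wfB by (rule Rs_TL)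
  have LG: "Ls ?G = Max (Rs ` fset A)" by (rule Ls_SG_Opts)
  have RG: "Rs ?G = Min (Ls ` fset B)" by (rule Rs_SG_Opts)
  have fA: "finite (fset A)" "finite (fset B)" by auto
  have b: "\<forall>t\<ge>0. Ls ?G - t \<le> \<alpha> t \<and> \<alpha> t \<le> Ls ?G \<and> Rs ?G \<le> \<beta> t \<and> \<beta> t \<le> Rs ?G + t"
  proof (intro allI impI)
    fix t :: real assume t: "0 \<le> t"
    have cA: "Rs g \<le> Rs (cool g t) \<and> Rs (cool g t) \<le> Rs g + t" if "g \<in> fset A" for g
      using gA that t unfolding good_def by blast
    have cB: "Ls g - t \<le> Ls (cool g t) \<and> Ls (cool g t) \<le> Ls g" if "g \<in> fset B" for g
      using gB that t unfolding good_def by blast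
    have 1: "Max (Rs ` fset A) \<le> Max ((\<lambda>g. Rs (cool g t) - t) ` fset A) + t"
      using cA by (intro Max_le_shift[OF fA(1) neA]) auto
    have "\<forall>g\<in>fset A. Rs (cool g t) - t \<le> Rs g + 0"
    proof
      fix g assume "g \<in> fset A"
      then show "Rs (cool g t) - t \<le> Rs g + 0" using cA[of g] t by linarith
    qed
    then have 2: "Max ((\<lambda>g. Rs (cool g t) - t) ` fset A) \<le> Max (Rs ` fset A) + 0"
      by (intro Max_le_shift[OF fA(1) neA])
    have "\<forall>g\<in>fset B. Ls g \<le> Ls (cool g t) + t + 0"
    proof
      fix g assume "g \<in> fset B"
      then show "Ls g \<le> Ls (cool g t) + t + 0" using cB[of g] t by linarith
    qed
    then have 3: "Min (Ls ` fset B) \<le> Min ((\<lambda>g. Ls (cool g t) + t) ` fset B) + 0"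
      by (intro Min_le_shift[OF fA(2) neB])
    have 4: "Min ((\<lambda>g. Ls (cool g t) + t) ` fset B) \<le> Min (Ls ` fset B) + t"
      using cB by (intro Min_le_shift[OF fA(2) neB]) auto
    show "Ls ?G - t \<le> \<alpha> t \<and> \<alpha> t \<le> Ls ?G \<and> Rs ?G \<le> \<beta> t \<and> \<beta> t \<le> Rs ?G + t"
      using 1 2 3 4 unfolding LG RG \<alpha>_eq \<beta>_eq by linarith
  qed
  have "\<exists>K. \<forall>g\<in>fset A \<union> fset B. K \<ge> 0 \<and> (\<forall>u v. \<bar>Ls (cool g u) - Ls (cool g v)\<bar> \<le> K * \<bar>u - v\<bar> \<and>
           \<bar>Rs (cool g u) - Rs (cool g v)\<bar> \<le> K * \<bar>u - v\<bar>)"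
  proof (rule finite_common)
    show "\<forall>g\<in>fset A \<union> fset B. \<exists>K. K \<ge> 0 \<and> (\<forall>u v. \<bar>Ls (cool g u) - Ls (cool g v)\<bar> \<le> K * \<bar>u - v\<bar> \<and>
           \<bar>Rs (cool g u) - Rs (cool g v)\<bar> \<le> K * \<bar>u - v\<bar>)"
      using gA gB unfolding good_def by blast
    fix g and x y :: real
    assume a: "0 \<le> x \<and> (\<forall>u v. \<bar>Ls (cool g u) - Ls (cool g v)\<bar> \<le> x * \<bar>u - v\<bar> \<and>
           \<bar>Rs (cool g u) - Rs (cool g v)\<bar> \<le> x * \<bar>u - v\<bar>)" and xy: "x \<le> y"
    have "x * \<bar>u - v\<bar> \<le> y * \<bar>u - v\<bar>" for u v :: real using xy by (intro mult_right_mono) auto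
    then show "0 \<le> y \<and> (\<forall>u v. \<bar>Ls (cool g u) - Ls (cool g v)\<bar> \<le> y * \<bar>u - v\<bar> \<and>
           \<bar>Rs (cool g u) - Rs (cool g v)\<bar> \<le> y * \<bar>u - v\<bar>)"
      using a xy by (meson order_trans)
  qed simp
  then obtain K where K: "\<forall>g\<in>fset A \<union> fset B. K \<ge> 0 \<and> (\<forall>u v. \<bar>Ls (cool g u) - Ls (cool g v)\<bar> \<le> K * \<bar>u - v\<bar> \<and>
           \<bar>Rs (cool g u) - Rs (cool g v)\<bar> \<le> K * \<bar>u - v\<bar>)" by blast
  have K0: "K \<ge> 0" using K neA by auto
  have lip: "\<forall>u v. \<bar>\<alpha> u - \<alpha> v\<bar> \<le> (K + 1) * \<bar>u - v\<bar> \<and> \<bar>\<beta> u - \<beta> v\<bar> \<le> (K + 1) * \<bar>u - v\<bar>"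
  proof (intro allI)
    fix u v :: real
    have l1: "\<alpha> w \<le> \<alpha> w' + (K * \<bar>u - v\<bar> + \<bar>u - v\<bar>)" if "{w, w'} = {u, v}" for w w'
    proof -
      have "\<forall>g\<in>fset A. Rs (cool g w) - w \<le> (Rs (cool g w') - w') + (K * \<bar>u - v\<bar> + \<bar>u - v\<bar>)"
      proof
        fix g assume "g \<in> fset A"
        then have "\<bar>Rs (cool g w) - Rs (cool g w')\<bar> \<le> K * \<bar>w - w'\<bar>" using K by blast
        moreover have "\<bar>w - w'\<bar> = \<bar>u - v\<bar>" using that by (auto simp: doubleton_eq_iff abs_minus_commute)
        ultimately show "Rs (cool g w) - w \<le> (Rs (cool g w') - w') + (K * \<bar>u - v\<bar> + \<bar>u - v\<bar>)"
          by (smt (verit))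
      qed
      then show ?thesis unfolding \<alpha>_eq by (intro Max_le_shift[OF fA(1) neA])
    qed
    have l2: "\<beta> w \<le> \<beta> w' + (K * \<bar>u - v\<bar> + \<bar>u - v\<bar>)" if "{w, w'} = {u, v}" for w w'
    proof -
      have "\<forall>g\<in>fset B. Ls (cool g w) + w \<le> (Ls (cool g w') + w') + (K * \<bar>u - v\<bar> + \<bar>u - v\<bar>)"
      proof
        fix g assume "g \<in> fset B"
        then have "\<bar>Ls (cool g w) - Ls (cool g w')\<bar> \<le> K * \<bar>w - w'\<bar>" using K by blast
        moreover have "\<bar>w - w'\<bar> = \<bar>u - v\<bar>" using that by (auto simp: doubleton_eq_iff abs_minus_commute)
        ultimately show "Ls (cool g w) + w \<le> (Ls (cool g w') + w') + (K * \<bar>u - v\<bar> + \<bar>u - v\<bar>)"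
          by (smt (verit))
      qed
      then show ?thesis unfolding \<beta>_eq by (intro Min_le_shift[OF fA(2) neB])
    qed
    have "\<alpha> u \<le> \<alpha> v + (K * \<bar>u - v\<bar> + \<bar>u - v\<bar>)" "\<alpha> v \<le> \<alpha> u + (K * \<bar>u - v\<bar> + \<bar>u - v\<bar>)"
      "\<beta> u \<le> \<beta> v + (K * \<bar>u - v\<bar> + \<bar>u - v\<bar>)" "\<beta> v \<le> \<beta> u + (K * \<bar>u - v\<bar> + \<bar>u - v\<bar>)"
      using l1[of u v] l1[of v u] l2[of u v] l2[of v u] by auto
    then show "\<bar>\<alpha> u - \<alpha> v\<bar> \<le> (K + 1) * \<bar>u - v\<bar> \<and> \<bar>\<beta> u - \<beta> v\<bar> \<le> (K + 1) * \<bar>u - v\<bar>"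
      by (simp add: distrib_right abs_le_iff)
  qed
  have "\<exists>T. \<forall>g\<in>fset A \<union> fset B. \<forall>u\<ge>T. Ls (cool g u) = Ls (cool g T) \<and> Rs (cool g u) = Rs (cool g T)"
  proof (rule finite_common)
    show "\<forall>g\<in>fset A \<union> fset B. \<exists>T. \<forall>u\<ge>T. Ls (cool g u) = Ls (cool g T) \<and> Rs (cool g u) = Rs (cool g T)"
      using gA gB unfolding good_def by blast
    fix g and x y :: real
    assume a: "\<forall>u\<ge>x. Ls (cool g u) = Ls (cool g x) \<and> Rs (cool g u) = Rs (cool g x)" and xy: "x \<le> y"
    show "\<forall>u\<ge>y. Ls (cool g u) = Ls (cool g y) \<and> Rs (cool g u) = Rs (cool g y)"
    proof (intro allI impI)
      fix u assume "y \<le> u"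
      then show "Ls (cool g u) = Ls (cool g y) \<and> Rs (cool g u) = Rs (cool g y)"
        using a[rule_format, of u] a[rule_format, of y] xy by auto
    qed
  qed simp
  then obtain T where T: "\<forall>g\<in>fset A \<union> fset B. \<forall>u\<ge>T. Ls (cool g u) = Ls (cool g T) \<and> Rs (cool g u) = Rs (cool g T)"
    by blast
  have ev: "\<forall>u\<ge>T. \<alpha> u = \<alpha> T + T - u \<and> \<beta> u = \<beta> T - T + u"
  proof (intro allI impI)
    fix u assume u: "T \<le> u"
    have eA: "Rs (cool g u) = Rs (cool g T)" if "g \<in> fset A" for g using T that u by blast
    have eB: "Ls (cool g u) = Ls (cool g T)" if "g \<in> fset B" for g using T that u by blast
    have 1: "\<alpha> u \<le> \<alpha> T + (T - u)" "\<alpha> T \<le> \<alpha> u + (u - T)"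
      unfolding \<alpha>_eq using eA by (auto intro!: Max_le_shift[OF fA(1) neA])
    have 2: "\<beta> u \<le> \<beta> T + (u - T)" "\<beta> T \<le> \<beta> u + (T - u)"
      unfolding \<beta>_eq using eB by (auto intro!: Min_le_shift[OF fA(2) neB])
    show "\<alpha> u = \<alpha> T + T - u \<and> \<beta> u = \<beta> T - T + u" using 1 2 by linarith
  qed
  define t0 where "t0 = (LEAST u. 0 \<le> u \<and> \<alpha> u = \<beta> u)"
  have t0: "0 \<le> t0" "\<alpha> t0 = \<beta> t0"
    using key[OF b _ lip ev z] K0 unfolding t0_def by auto
  have cg: "cool ?G t = (if t \<le> t0 then TL A B t else num (\<alpha> t0))" for t
    unfolding cool_Opts t0_def \<alpha>_def \<beta>_def Let_def by simp
  have LsC: "Ls (cool ?G t) = \<alpha> (min t t0)" and RsC: "Rs (cool ?G t) = \<beta> (min t t0)" for t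
    unfolding cg using t0 by (auto simp: \<alpha>_def \<beta>_def min_def)
  have mm: "\<bar>min u t0 - min v t0\<bar> \<le> \<bar>u - v\<bar>" for u v :: real by (simp add: min_def abs_if)
  show ?thesis
    unfolding good_def LsC RsC
  proof (intro conjI)
    show "\<forall>t\<ge>0. Ls ?G - t \<le> \<alpha> (min t t0) \<and> \<alpha> (min t t0) \<le> Ls ?G \<and> Rs ?G \<le> \<beta> (min t t0) \<and> \<beta> (min t t0) \<le> Rs ?G + t"
    proof (intro allI impI)
      fix t :: real assume t: "0 \<le> t"
      have "0 \<le> min t t0" "min t t0 \<le> t" using t t0 by auto
      then show "Ls ?G - t \<le> \<alpha> (min t t0) \<and> \<alpha> (min t t0) \<le> Ls ?G \<and> Rs ?G \<le> \<beta> (min t t0) \<and> \<beta> (min t t0) \<le> Rs ?G + t"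
        using b[rule_format, of "min t t0"] by linarith
    qed
    show "\<exists>K\<ge>0. \<forall>u v. \<bar>\<alpha> (min u t0) - \<alpha> (min v t0)\<bar> \<le> K * \<bar>u - v\<bar> \<and> \<bar>\<beta> (min u t0) - \<beta> (min v t0)\<bar> \<le> K * \<bar>u - v\<bar>"
    proof (intro exI[of _ "K + 1"] conjI allI)
      show "0 \<le> K + 1" using K0 by simp
      fix u v :: real
      have m: "(K + 1) * \<bar>min u t0 - min v t0\<bar> \<le> (K + 1) * \<bar>u - v\<bar>" using mm K0 by (intro mult_left_mono) auto
      show "\<bar>\<alpha> (min u t0) - \<alpha> (min v t0)\<bar> \<le> (K + 1) * \<bar>u - v\<bar>"
        using lip[rule_format, of "min u t0" "min v t0"] m by linarith
      show "\<bar>\<beta> (min u t0) - \<beta> (min v t0)\<bar> \<le> (K + 1) * \<bar>u - v\<bar>"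
        using lip[rule_format, of "min u t0" "min v t0"] m by linarith
    qed
    show "\<exists>T. \<forall>u\<ge>T. \<alpha> (min u t0) = \<alpha> (min T t0) \<and> \<beta> (min u t0) = \<beta> (min T t0)"
      by (rule exI[of _ t0]) auto
  qed
qed

lemma main: "hyp G \<Longrightarrow> good G"
proof (induction G)
  case (SG l r)
  have h: "hyp (SG l r)" by fact
  have wf: "wf_game (SG l r)" and dic: "dicotic (SG l r)" and nz: "nonzugzwang (SG l r)"
    and tn: "terminals_numbers (SG l r)" using h by (auto simp: hyp_def)
  have pr: "position (SG l r) (SG l r)" by (rule position.refl)
  have dic0: "left_opts (SG l r) = {} \<longleftrightarrow> right_opts (SG l r) = {}" using dic pr by (auto simp: dicotic_def)
  show ?case
  proof (cases l)
    case (Emp a)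
    show ?thesis
    proof (cases r)
      case (Emp b)
      have "is_number (SG l r)" using tn pr \<open>l = Emp a\<close> Emp
        by (auto simp: terminals_numbers_def left_opts_def right_opts_def side_opts_def)
      then have ab: "b = a" using Emp \<open>l = Emp a\<close> by (auto simp: is_number_def num_def)
      have c: "cool (SG l r) t = num a" for t
        using Emp \<open>l = Emp a\<close> ab by (simp add: cool_step_def)
      have "Ls (SG l r) = a" "Rs (SG l r) = a" using Emp \<open>l = Emp a\<close> ab by (auto simp: Ls_def Rs_def)
      then show ?thesis unfolding good_def c by auto
    next
      case (Opts B)
      have "fset B \<noteq> {}" using wf Opts by auto
      then show ?thesis using dic0 Opts \<open>l = Emp a\<close>
        by (simp add: left_opts_def right_opts_def side_opts_def)
    qed
  next
    case (Opts A)
    show ?thesis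
    proof (cases r)
      case (Emp b)
      have "fset A \<noteq> {}" using wf Opts by auto
      then show ?thesis using dic0 Emp \<open>l = Opts A\<close>
        by (simp add: left_opts_def right_opts_def side_opts_def)
    next
      case (Opts B)
      note lA = \<open>l = Opts A\<close>
      have hA: "\<forall>g\<in>fset A. hyp g"
        using hyp_opt[OF h] lA by (auto simp: left_opts_def side_opts_def)
      have hB: "\<forall>g\<in>fset B. hyp g"
        using hyp_opt[OF h] Opts by (auto simp: right_opts_def side_opts_def)
      have gA: "\<forall>g\<in>fset A. good g" using SG.IH(1) hA lA by auto
      have gB: "\<forall>g\<in>fset B. good g" using SG.IH(2) hB Opts by auto
      have wA: "\<forall>g\<in>fset A. wf_game g" using hA by (auto simp: hyp_def)
      have wB: "\<forall>g\<in>fset B. wf_game g" using hB by (auto simp: hyp_def)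
      have nA: "fset A \<noteq> {}" "fset B \<noteq> {}" using wf Opts lA by auto
      have z: "Rs (SG l r) \<le> Ls (SG l r)" using nz pr by (auto simp: nonzugzwang_def)
      show ?thesis using good_Opts[OF wA wB nA gA gB] z lA Opts by simp
    qed
  qed
qed

theorem mainTheorem2:
  fixes G :: sgame and t :: real
  assumes "wf_game G" and "dicotic G" and "nonzugzwang G" and "terminals_numbers G"
    and "0 \<le> t"
  shows "0 \<le> Ls G - Ls (cool G t) \<and> Ls G - Ls (cool G t) \<le> t \<and>
         0 \<ge> Rs G - Rs (cool G t) \<and> Rs G - Rs (cool G t) \<ge> - t"
proof -
  have "good G" using assms by (intro main) (simp add: hyp_def)
  then have "Ls G - t \<le> Ls (cool G t) \<and> Ls (cool G t) \<le> Ls G \<and> Rs G \<le> Rs (cool G t) \<and> Rs (cool G t) \<le> Rs G + t"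
    using assms(5) unfolding good_def by blast
  then show ?thesis by linarith
qed

end
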